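(* Consider any instance of the large-market envy-free pricing problem described in the context with monotone hazard rate inverse demands and uniform peak $\lambda_i(0)=\lambda^{max}$, and a run of the ascending-price procedure with some stop parameter $k\ge1$. If an item $t$ belongs to the active set at two active prices $p_1<p_2$, then $c_t(y_t(p_1))\ge c_t(y_t(p_2))$, where $y_t(p)$ denotes the allocation of $t$ when the active price is $p$.
   Context: Model. Finite item set $S$, finite set $B$ of buyer types, bipartite graph $G=(B\cup S,E)$, $S_i=\{t:(i,t)\in E\}$. Buyer type $i$ has inverse demand $\lambda_i:[0,T_i]\to\mathbb{R}_{\ge0}$, non-increasing, continuously differentiable on $(0,T_i)$, with monotone hazard rate ($\lambda_i'/\lambda_i$ non-increasing), $\lambda_i(0)=\lambda^{max}$. Item $t$ has convex continuously differentiable production cost $C_t$ with derivative $c_t$. Allocations $y_t(i)\ge0$ ($>0$ only if $(i,t)\in E$), $\sum_ty_t(i)=x_i$, $y_t=\sum_iy_t(i)$. Best-response demand of type $i$ at price $q$: $\lambda_i(x_i)=q$. Min-cost flow for demand $\vec x$: feasible allocation minimizing $\sum_tC_t(y_t)$. $(\vec x^*,\vec y^* )$ a welfare maximizer (of $\sum_i\int_0^{x_i}\lambda_i-\sum_tC_t(y_t)$), $p^*_t=c_t(y^*_t)$. Ascending-price procedure with parameter $k\ge1$: start with $p_t=p^*_t$; ACTIVE = minimum-price items of $\vec p^*$ and buyer types receiving them in $\vec y^*$, rest INACTIVE, FINISH empty. Active items share an active price increased continuously; at active price $p$ active buyer types have best-response demand to $p$ and receive a min-cost flow within the subinstance induced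 by the active set; inactive entities keep their $\vec x^*,\vec y^*$ values, finished ones keep their values at finishing; $\vec y(p)$ is the resulting allocation. An inactive item $t$ (with the buyer types using it) becomes active when the active price reaches $p^*_t$. An active item $t$ (with buyer types using it) is finished and its price frozen once $p-c_t(y_t(p))\ge\frac1k(\lambda^{max}-c_t(y_t(p)))$. Ends when all are finished. *)

theory Defs
  imports "HOL-Analysis.Analysis"
begin

text \<open>Allocations are functions y :: item \<Rightarrow> buyer \<Rightarrow> real, y t i = y_t(i).\<close>

definition feasible_alloc ::
  "('b \<times> 's) set \<Rightarrow> 'b set \<Rightarrow> 's set \<Rightarrow> ('b \<Rightarrow> real) \<Rightarrow> ('s \<Rightarrow> 'b \<Rightarrow> real) \<Rightarrow> bool" where
  "feasible_alloc E B S x y \<longleftrightarrow>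
     (\<forall>t\<in>S. \<forall>i\<in>B. 0 \<le> y t i \<and> (0 < y t i \<longrightarrow> (i, t) \<in> E)) \<and>
     (\<forall>i\<in>B. (\<Sum>t\<in>S. y t i) = x i)"

definition load :: "'b set \<Rightarrow> ('s \<Rightarrow> 'b \<Rightarrow> real) \<Rightarrow> 's \<Rightarrow> real" where
  "load B y t = (\<Sum>i\<in>B. y t i)"

definition prod_cost ::
  "('s \<Rightarrow> real \<Rightarrow> real) \<Rightarrow> 'b set \<Rightarrow> 's set \<Rightarrow> ('s \<Rightarrow> 'b \<Rightarrow> real) \<Rightarrow> real" where
  "prod_cost C B S y = (\<Sum>t\<in>S. C t (load B y t))"

definition min_cost_flow ::
  "('b \<times> 's) set \<Rightarrow> ('s \<Rightarrow> real \<Rightarrow> real) \<Rightarrow> 'b set \<Rightarrow> 's set \<Rightarrow> ('b \<Rightarrow> real)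
     \<Rightarrow> ('s \<Rightarrow> 'b \<Rightarrow> real) \<Rightarrow> bool" where
  "min_cost_flow E C B S x y \<longleftrightarrow>
     feasible_alloc E B S x y \<and>
     (\<forall>y'. feasible_alloc E B S x y' \<longrightarrow> prod_cost C B S y \<le> prod_cost C B S y')"

definition welfare ::
  "('b \<Rightarrow> real \<Rightarrow> real) \<Rightarrow> ('s \<Rightarrow> real \<Rightarrow> real) \<Rightarrow> 'b set \<Rightarrow> 's set
     \<Rightarrow> ('b \<Rightarrow> real) \<Rightarrow> ('s \<Rightarrow> 'b \<Rightarrow> real) \<Rightarrow> real" where
  "welfare lam C B S x y = (\<Sum>i\<in>B. integral {0..x i} (lam i)) - prod_cost C B S y"

definition welfare_max ::
  "('b \<times> 's) set \<Rightarrow> ('b \<Rightarrow> real \<Rightarrow> real) \<Rightarrow> ('b \<Rightarrow> real) \<Rightarrow> ('s \<Rightarrow> real \<Rightarrow> real)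
     \<Rightarrow> 'b set \<Rightarrow> 's set \<Rightarrow> ('b \<Rightarrow> real) \<Rightarrow> ('s \<Rightarrow> 'b \<Rightarrow> real) \<Rightarrow> bool" where
  "welfare_max E lam T C B S x y \<longleftrightarrow>
     (\<forall>i\<in>B. 0 \<le> x i \<and> x i \<le> T i) \<and> feasible_alloc E B S x y \<and>
     (\<forall>x' y'. (\<forall>i\<in>B. 0 \<le> x' i \<and> x' i \<le> T i) \<and> feasible_alloc E B S x' y' \<longrightarrow>
        welfare lam C B S x' y' \<le> welfare lam C B S x y)"

definition best_response ::
  "('b \<Rightarrow> real \<Rightarrow> real) \<Rightarrow> ('b \<Rightarrow> real) \<Rightarrow> 'b \<Rightarrow> real \<Rightarrow> real \<Rightarrow> bool" where
  "best_response lam T i q x \<longleftrightarrow> 0 \<le> x \<and> x \<le> T i \<and> lam i x = q"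

text \<open>A run of the ascending-price procedure with parameter k, relative to the
  welfare-maximizing allocation ys (with prices p*_t = c_t(y*_t)).
  Run data: f t = price at which item t is finished (its price frozen);
  AS p / AB p = active items / active buyer types at active price p;
  xA p = demands of active buyer types; yA p = min-cost flow in the active subinstance.
  Convention: item t is active exactly for active prices p with p*_t \<le> p \<le> f t;
  at the finishing price the values are still computed with t active and then frozen.\<close>
definition ascending_run ::
  "('b \<times> 's) set \<Rightarrow> ('b \<Rightarrow> real \<Rightarrow> real) \<Rightarrow> ('b \<Rightarrow> real) \<Rightarrow> ('s \<Rightarrow> real \<Rightarrow> real)
    \<Rightarrow> ('s \<Rightarrow> real \<Rightarrow> real) \<Rightarrow> real \<Rightarrow> 'b set \<Rightarrow> 's set \<Rightarrow> ('s \<Rightarrow> 'b \<Rightarrow> real) \<Rightarrow> real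
    \<Rightarrow> ('s \<Rightarrow> real) \<Rightarrow> (real \<Rightarrow> 's set) \<Rightarrow> (real \<Rightarrow> 'b set) \<Rightarrow> (real \<Rightarrow> 'b \<Rightarrow> real)
    \<Rightarrow> (real \<Rightarrow> 's \<Rightarrow> 'b \<Rightarrow> real) \<Rightarrow> bool" where
  "ascending_run E lam T C c lmax B S ys k f AS AB xA yA \<longleftrightarrow>
    (let ps = (\<lambda>t. c t (load B ys t));
         p0 = Min (ps ` S);
         pend = Max (f ` S);
         finish_cond = (\<lambda>t p. p - c t (load (AB p) (yA p) t)
                                \<ge> (lmax - c t (load (AB p) (yA p) t)) / k)
     in (\<forall>t\<in>S. ps t \<le> f t) \<and>
        (\<forall>p. AS p = {t\<in>S. ps t \<le> p \<and> p \<le> f t}) \<and>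
        (\<forall>p. p0 \<le> p \<and> p \<le> pend \<longrightarrow>
            AB p = {i\<in>B. (\<exists>t\<in>S. 0 < ys t i \<and> ps t \<le> p) \<and>
                          \<not> (\<exists>t\<in>S. f t < p \<and> i \<in> AB (f t) \<and> 0 < yA (f t) t i)} \<and>
            (\<forall>i\<in>AB p. best_response lam T i p (xA p i)) \<and>
            min_cost_flow E C (AB p) (AS p) (xA p) (yA p)) \<and>
        (\<forall>t\<in>S. finish_cond t (f t) \<and> (\<forall>p. ps t \<le> p \<and> p < f t \<longrightarrow> \<not> finish_cond t p)))"

end

theory Submission imports Defs begin
lemma tangent_right:
  fixes f :: "real \<Rightarrow> real"
  assumes convex: "convex_on {0..} f"
    and deriv: "(f has_real_derivative f') (at c within {0..})"
    and c0: "0 \<le> c" and xc: "c < x"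
  shows "f' * (x - c) \<le> f x - f c"
proof -
  have "((\<lambda>y. (f y - f c) / (y - c)) \<longlongrightarrow> f') (at_right c)"
    using deriv unfolding has_field_derivative_iff
    by (rule tendsto_within_subset) (use c0 in auto)
  moreover have "eventually (\<lambda>y. (f y - f c) / (y - c) \<le> (f x - f c) / (x - c)) (at_right c)"
    using eventually_at_right_real[OF xc]
  proof eventually_elim
    fix y assume y: "y \<in> {c<..<x}"
    have cv: "convex_on {c..x} f" by (rule convex_on_subset[OF convex]) (use c0 in auto)
    have "f y \<le> (f x - f c) / (x - c) * (y - c) + f c"
      using convex_onD_Icc'[OF cv, of y] y by auto
    hence "f y - f c \<le> (f x - f c) / (x - c) * (y - c)" by simp
    thus "(f y - f c) / (y - c) \<le> (f x - f c) / (x - c)" using y xc by (simp add: field_split_simps)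
  qed
  ultimately have "f' \<le> (f x - f c) / (x - c)"
    by (simp add: tendsto_upperbound)
  thus ?thesis using xc by (simp add: field_simps)
qed

lemma tangent:
  fixes f :: "real \<Rightarrow> real"
  assumes convex: "convex_on {0..} f"
    and deriv: "\<forall>y\<ge>0. (f has_real_derivative g y) (at y within {0..})"
    and c0: "0 \<le> c" and x0: "0 \<le> x"
  shows "g c * (x - c) \<le> f x - f c"
proof (cases x c rule: linorder_cases)
  case less
  then have "c \<in> interior {0..}" using x0 by auto
  then show ?thesis
    using convex_on_imp_above_tangent[OF convex _ _ _ deriv[rule_format, OF c0]] x0
    by (auto simp: connected_Ici)
next
  case greater
  then show ?thesis using tangent_right[OF convex deriv[rule_format, OF c0] c0] by auto
qed auto

lemma c_mono:
  fixes f :: "real \<Rightarrow> real"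
  assumes convex: "convex_on {0..} f"
    and deriv: "\<forall>y\<ge>0. (f has_real_derivative g y) (at y within {0..})"
    and x0: "0 \<le> x" and xy: "x \<le> y"
  shows "g x \<le> g y"
proof -
  have 1: "g x * (y - x) \<le> f y - f x" by (rule tangent[OF convex deriv x0]) (use xy x0 in auto)
  have 2: "g y * (x - y) \<le> f x - f y" by (rule tangent[OF convex deriv]) (use xy x0 in auto)
  from 1 2 have "(g y - g x) * (y - x) \<ge> 0" by (simp add: algebra_simps)
  then show ?thesis using xy
    by (cases "x = y") (auto simp: zero_le_mult_iff)
qed

lemma kkt:
  fixes C c :: "'s \<Rightarrow> real \<Rightarrow> real"
  assumes mcf: "min_cost_flow E C B' S' x y" and finB: "finite B'" and finS: "finite S'"
   and conv: "\<forall>t\<in>S'. convex_on {0..} (C t)"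
   and der: "\<forall>t\<in>S'. \<forall>y\<ge>0. (C t has_real_derivative c t y) (at y within {0..})"
   and cont: "\<forall>t\<in>S'. continuous_on {0..} (c t)"
   and sS: "s\<in>S'" and rS: "r\<in>S'" and iB: "i\<in>B'" and pos: "0 < y s i" and edge: "(i,r)\<in>E"
  shows "c s (load B' y s) \<le> c r (load B' y r)"
proof (cases "r = s")
  case False
  define Ls where "Ls = load B' y s"
  define Lr where "Lr = load B' y r"
  have feas: "feasible_alloc E B' S' x y" and opt: "\<And>y'. feasible_alloc E B' S' x y' \<Longrightarrow> prod_cost C B' S' y \<le> prod_cost C B' S' y'"
    using mcf unfolding min_cost_flow_def by auto
  have nonneg: "\<forall>u\<in>S'. \<forall>j\<in>B'. 0 \<le> y u j" using feas unfolding feasible_alloc_def by auto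
  have Lr0: "0 \<le> Lr" unfolding Lr_def load_def using nonneg rS by (auto intro: sum_nonneg)
  have Ls_ge: "y s i \<le> Ls" unfolding Ls_def load_def
    by (rule member_le_sum) (use nonneg sS iB finB in auto)
  have key: "c s (Ls - e) \<le> c r (Lr + e)" if e0: "0 < e" and e1: "e < y s i" for e
  proof -
    define y' where "y' = (\<lambda>u j. y u j + (if u = r \<and> j = i then e else 0) - (if u = s \<and> j = i then e else 0))"
    have A: "\<forall>u\<in>S'. \<forall>j\<in>B'. 0 \<le> y' u j \<and> (0 < y' u j \<longrightarrow> (j, u) \<in> E)"
      using nonneg e0 e1 False edge feas unfolding y'_def feasible_alloc_def
      by (auto split: if_splits)
    have B: "\<forall>j\<in>B'. (\<Sum>u\<in>S'. y' u j) = x j"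
    proof
      fix j assume j: "j \<in> B'"
      have "(\<Sum>u\<in>S'. y' u j) = (\<Sum>u\<in>S'. y u j) + (\<Sum>u\<in>S'. (if u = r \<and> j = i then e else 0)) - (\<Sum>u\<in>S'. (if u = s \<and> j = i then e else 0))"
        unfolding y'_def by (simp add: sum.distrib sum_subtractf)
      also have "\<dots> = (\<Sum>u\<in>S'. y u j)"
        using finS rS sS by (cases "j = i") (simp_all add: sum.delta)
      also have "\<dots> = x j" using feas j unfolding feasible_alloc_def by auto
      finally show "(\<Sum>u\<in>S'. y' u j) = x j" .
    qed
    have feas': "feasible_alloc E B' S' x y'" using A B unfolding feasible_alloc_def by blast
    have ld: "load B' y' u = load B' y u + (if u = r then e else 0) - (if u = s then e else 0)" for u
    proof -
      have "load B' y' u = load B' y u + (\<Sum>j\<in>B'. (if u = r \<and> j = i then e else 0)) - (\<Sum>j\<in>B'. (if u = s \<and> j = i then e else 0))"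
        unfolding y'_def load_def by (simp add: sum.distrib sum_subtractf)
      also have "\<dots> = load B' y u + (if u = r then e else 0) - (if u = s then e else 0)"
        using finB iB by (simp add: sum.delta)
      finally show ?thesis .
    qed
    have pc: "prod_cost C B' S' y' = prod_cost C B' S' y + (C s (Ls - e) - C s Ls) + (C r (Lr + e) - C r Lr)"
    proof -
      have "\<forall>u\<in>S'. C u (load B' y' u) = C u (load B' y u) + (if u = s then C s (Ls - e) - C s Ls else 0) + (if u = r then C r (Lr + e) - C r Lr else 0)"
        using False unfolding ld Ls_def Lr_def by auto
      then have "prod_cost C B' S' y' = (\<Sum>u\<in>S'. C u (load B' y u) + (if u = s then C s (Ls - e) - C s Ls else 0) + (if u = r then C r (Lr + e) - C r Lr else 0))"
        unfolding prod_cost_def by (intro sum.cong refl) blast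
      also have "\<dots> = prod_cost C B' S' y + (C s (Ls - e) - C s Ls) + (C r (Lr + e) - C r Lr)"
        unfolding prod_cost_def using finS sS rS by (simp add: sum.distrib sum.delta)
      finally show ?thesis .
    qed
    have "prod_cost C B' S' y \<le> prod_cost C B' S' y'" by (rule opt[OF feas'])
    then have tot: "0 \<le> (C s (Ls - e) - C s Ls) + (C r (Lr + e) - C r Lr)" using pc by simp
    have t1: "c s (Ls - e) * (Ls - (Ls - e)) \<le> C s Ls - C s (Ls - e)"
      by (rule tangent) (use conv der sS Ls_ge e1 e0 Lr0 in auto)
    have t2: "c r (Lr + e) * (Lr - (Lr + e)) \<le> C r Lr - C r (Lr + e)"
      by (rule tangent) (use conv der rS Lr0 e0 in auto)
    from tot t1 t2 have "e * (c s (Ls - e) - c r (Lr + e)) \<le> 0" by (simp add: algebra_simps)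
    then show ?thesis using e0 by (simp add: mult_le_0_iff)
  qed
  show ?thesis
  proof (rule ccontr)
    assume "\<not> ?thesis"
    then have lt: "c r Lr < c s Ls" unfolding Ls_def Lr_def by simp
    define d where "d = (c s Ls - c r Lr) / 2"
    have d0: "0 < d" using lt d_def by simp
    have Ls0: "0 \<le> Ls" using Ls_ge pos by simp
    obtain d1 where d1: "d1 > 0" "\<forall>z\<in>{0..}. dist z Ls < d1 \<longrightarrow> dist (c s z) (c s Ls) < d"
      using cont sS Ls0 d0 unfolding continuous_on_iff by fastforce
    obtain d2 where d2: "d2 > 0" "\<forall>z\<in>{0..}. dist z Lr < d2 \<longrightarrow> dist (c r z) (c r Lr) < d"
      using cont rS Lr0 d0 unfolding continuous_on_iff by fastforce
    define e where "e = min (y s i / 2) (min (d1/2) (d2/2))"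
    have e0: "0 < e" and e1: "e < y s i" using pos d1 d2 unfolding e_def by auto
    have a: "dist (c s (Ls - e)) (c s Ls) < d"
      using d1(2)[rule_format, of "Ls - e"] Ls_ge e1 e0 d1 unfolding e_def by (auto simp: dist_real_def)
    have b: "dist (c r (Lr + e)) (c r Lr) < d"
      using d2(2)[rule_format, of "Lr + e"] Lr0 e0 d2 unfolding e_def by (auto simp: dist_real_def)
    have k: "c s (Ls - e) \<le> c r (Lr + e)" by (rule key[OF e0 e1])
    have a': "c s Ls - d < c s (Ls - e)" using a unfolding dist_real_def by (simp add: abs_less_iff)
    have b': "c r (Lr + e) < c r Lr + d" using b unfolding dist_real_def by (simp add: abs_less_iff)
    have dd: "2 * d = c s Ls - c r Lr" unfolding d_def by simp
    from a' b' k dd show False by linarith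
  qed
qed simp

theorem lemma2:
  fixes E :: "('b \<times> 's) set" and B :: "'b set" and S :: "'s set"
    and lam :: "'b \<Rightarrow> real \<Rightarrow> real" and T :: "'b \<Rightarrow> real" and lmax :: real
    and C c :: "'s \<Rightarrow> real \<Rightarrow> real" and k :: real
    and xs :: "'b \<Rightarrow> real" and ys :: "'s \<Rightarrow> 'b \<Rightarrow> real"
    and f :: "'s \<Rightarrow> real" and AS :: "real \<Rightarrow> 's set" and AB :: "real \<Rightarrow> 'b set"
    and xA :: "real \<Rightarrow> 'b \<Rightarrow> real" and yA :: "real \<Rightarrow> 's \<Rightarrow> 'b \<Rightarrow> real"
    and t :: 's and p1 p2 :: real
  assumes finB: "finite B" and finS: "finite S" and neS: "S \<noteq> {}"
    and graph: "E \<subseteq> B \<times> S"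
    and lam_nonneg: "\<forall>i\<in>B. \<forall>x\<in>{0..T i}. 0 \<le> lam i x"
    and lam_mono: "\<forall>i\<in>B. \<forall>x y. 0 \<le> x \<and> x \<le> y \<and> y \<le> T i \<longrightarrow> lam i y \<le> lam i x"
    and lam_diff: "\<forall>i\<in>B. \<forall>x\<in>{0<..<T i}. lam i differentiable (at x)"
    and lam_C1: "\<forall>i\<in>B. continuous_on {0<..<T i} (deriv (lam i))"
    and lam_MHR: "\<forall>i\<in>B. \<forall>x y. 0 < x \<and> x \<le> y \<and> y < T i \<and> 0 < lam i x \<and> 0 < lam i y \<longrightarrow>
                    deriv (lam i) y / lam i y \<le> deriv (lam i) x / lam i x"
    and lam_peak: "\<forall>i\<in>B. lam i 0 = lmax"
    and C_convex: "\<forall>t\<in>S. convex_on {0..} (C t)"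
    and C_deriv: "\<forall>t\<in>S. \<forall>y\<ge>0. (C t has_real_derivative c t y) (at y within {0..})"
    and c_cont: "\<forall>t\<in>S. continuous_on {0..} (c t)"
    and k_ge: "1 \<le> k"
    and wmax: "welfare_max E lam T C B S xs ys"
    and run: "ascending_run E lam T C c lmax B S ys k f AS AB xA yA"
    and tS: "t \<in> S"
    and p12: "p1 < p2"
    and act1: "t \<in> AS p1" and act2: "t \<in> AS p2"
  shows "c t (load (AB p1) (yA p1) t) \<ge> c t (load (AB p2) (yA p2) t)"
proof -
  define ps where "ps = (\<lambda>t. c t (load B ys t))"
  define L where "L = (\<lambda>p u. load (AB p) (yA p) u)"
  have AS_eq: "AS p = {t\<in>S. ps t \<le> p \<and> p \<le> f t}" for p
    using run unfolding ascending_run_def Let_def ps_def by auto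
  have inner: "AB p = {i\<in>B. (\<exists>t\<in>S. 0 < ys t i \<and> ps t \<le> p) \<and>
                          \<not> (\<exists>t\<in>S. f t < p \<and> i \<in> AB (f t) \<and> 0 < yA (f t) t i)} \<and>
            (\<forall>i\<in>AB p. best_response lam T i p (xA p i)) \<and>
            min_cost_flow E C (AB p) (AS p) (xA p) (yA p)"
    if "Min (ps ` S) \<le> p" "p \<le> Max (f ` S)" for p
    using run that unfolding ascending_run_def Let_def ps_def by auto
  have mcf_ys: "min_cost_flow E C B S xs ys"
    using wmax unfolding welfare_max_def min_cost_flow_def welfare_def by force
  have KKT_ys: "ps s \<le> ps r" if "s \<in> S" "r \<in> S" "i \<in> B" "0 < ys s i" "(i, r) \<in> E" for s r i
    unfolding ps_def by (rule kkt[OF mcf_ys finB finS C_convex C_deriv c_cont that])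

  have Minle: "Min (ps ` S) \<le> ps t" using finS tS by auto
  have fle: "f t \<le> Max (f ` S)" using finS tS by auto
  have step: "c t (L q t) \<le> c t (L p t)"
    if hp: "ps t \<le> p" and pq: "p < q" and hq: "q \<le> f t" and nof: "\<forall>r\<in>S. \<not> (p < f r \<and> f r < q)" for p q
  proof (rule ccontr)
    assume "\<not> ?thesis"
    hence tlt: "c t (L p t) < c t (L q t)" by simp
    have ip: "AB p = {i\<in>B. (\<exists>t\<in>S. 0 < ys t i \<and> ps t \<le> p) \<and>
                          \<not> (\<exists>t\<in>S. f t < p \<and> i \<in> AB (f t) \<and> 0 < yA (f t) t i)}"
      "\<forall>i\<in>AB p. best_response lam T i p (xA p i)"
      "min_cost_flow E C (AB p) (AS p) (xA p) (yA p)"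
      using inner[of p] Minle fle hp pq hq by auto
    have iq: "AB q = {i\<in>B. (\<exists>t\<in>S. 0 < ys t i \<and> ps t \<le> q) \<and>
                          \<not> (\<exists>t\<in>S. f t < q \<and> i \<in> AB (f t) \<and> 0 < yA (f t) t i)}"
      "\<forall>i\<in>AB q. best_response lam T i q (xA q i)"
      "min_cost_flow E C (AB q) (AS q) (xA q) (yA q)"
      using inner[of q] Minle fle hp pq hq by auto
    have ABpB: "AB p \<subseteq> B" and ABqB: "AB q \<subseteq> B" using ip(1) iq(1) by auto
    have finABp: "finite (AB p)" and finABq: "finite (AB q)"
      using ABpB ABqB finB finite_subset by auto
    have ASpS: "AS p \<subseteq> S" and ASqS: "AS q \<subseteq> S" using AS_eq by auto
    have finASp: "finite (AS p)" and finASq: "finite (AS q)"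
      using ASpS ASqS finS finite_subset by auto
    have feasp: "feasible_alloc E (AB p) (AS p) (xA p) (yA p)" using ip(3) unfolding min_cost_flow_def by auto
    have feasq: "feasible_alloc E (AB q) (AS q) (xA q) (yA q)" using iq(3) unfolding min_cost_flow_def by auto
    have nnp: "\<And>s i. s \<in> AS p \<Longrightarrow> i \<in> AB p \<Longrightarrow> 0 \<le> yA p s i"
      and edp: "\<And>s i. s \<in> AS p \<Longrightarrow> i \<in> AB p \<Longrightarrow> 0 < yA p s i \<Longrightarrow> (i, s) \<in> E"
      and smp: "\<And>i. i \<in> AB p \<Longrightarrow> (\<Sum>s\<in>AS p. yA p s i) = xA p i"
      using feasp unfolding feasible_alloc_def by auto
    have nnq: "\<And>s i. s \<in> AS q \<Longrightarrow> i \<in> AB q \<Longrightarrow> 0 \<le> yA q s i"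
      and edq: "\<And>s i. s \<in> AS q \<Longrightarrow> i \<in> AB q \<Longrightarrow> 0 < yA q s i \<Longrightarrow> (i, s) \<in> E"
      and smq: "\<And>i. i \<in> AB q \<Longrightarrow> (\<Sum>s\<in>AS q. yA q s i) = xA q i"
      using feasq unfolding feasible_alloc_def by auto
    have C_convex': "\<forall>u\<in>AS p. convex_on {0..} (C u)" "\<forall>u\<in>AS q. convex_on {0..} (C u)"
      using C_convex ASpS ASqS by auto
    have C_deriv': "\<forall>u\<in>AS p. \<forall>y\<ge>0. (C u has_real_derivative c u y) (at y within {0..})"
      "\<forall>u\<in>AS q. \<forall>y\<ge>0. (C u has_real_derivative c u y) (at y within {0..})"
      using C_deriv ASpS ASqS by auto
    have c_cont': "\<forall>u\<in>AS p. continuous_on {0..} (c u)" "\<forall>u\<in>AS q. continuous_on {0..} (c u)"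
      using c_cont ASpS ASqS by auto
    have kp: "c s (L p s) \<le> c r (L p r)"
      if "s \<in> AS p" "r \<in> AS p" "i \<in> AB p" "0 < yA p s i" "(i, r) \<in> E" for s r i
      unfolding L_def by (rule kkt[OF ip(3) finABp finASp C_convex'(1) C_deriv'(1) c_cont'(1) that])
    have kq: "c s (L q s) \<le> c r (L q r)"
      if "s \<in> AS q" "r \<in> AS q" "i \<in> AB q" "0 < yA q s i" "(i, r) \<in> E" for s r i
      unfolding L_def by (rule kkt[OF iq(3) finABq finASq C_convex'(2) C_deriv'(2) c_cont'(2) that])
    define U where "U = {s \<in> AS p \<inter> AS q. c s (L p s) < c s (L q s)}"
    have tU: "t \<in> U" unfolding U_def using AS_eq tS hp pq hq tlt by auto
    have UAp: "U \<subseteq> AS p" and UAq: "U \<subseteq> AS q" unfolding U_def by auto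
    have finU: "finite U" using finASp UAp finite_subset by auto
    have Lp0: "0 \<le> L p s" if "s \<in> AS p" for s
      unfolding L_def load_def using nnp that by (auto intro: sum_nonneg)
    have Ult: "L p s < L q s" if sU: "s \<in> U" for s
    proof (rule ccontr)
      assume "\<not> ?thesis"
      then have le: "L q s \<le> L p s" by simp
      have sS: "s \<in> S" using sU UAq ASqS by auto
      have Lq0: "0 \<le> L q s" unfolding L_def load_def using nnq sU UAq by (auto intro: sum_nonneg)
      have "c s (L q s) \<le> c s (L p s)"
        by (rule c_mono[of "C s"]) (use C_convex C_deriv sS Lq0 le in auto)
      then show False using sU unfolding U_def by auto
    qed
    have buyer: "(\<Sum>s\<in>U. yA q s i) \<le> (if i \<in> AB p then (\<Sum>s\<in>U. yA p s i) else 0)"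
      if iAq: "i \<in> AB q" for i
    proof (cases "\<exists>s\<in>U. 0 < yA q s i")
      case False
      then have "\<forall>s\<in>U. yA q s i = 0" using nnq iAq UAq by force
      then have z: "(\<Sum>s\<in>U. yA q s i) = 0" by simp
      have "0 \<le> (\<Sum>s\<in>U. yA p s i)" if "i \<in> AB p" using nnp that UAp by (auto intro: sum_nonneg)
      then show ?thesis using z by auto
    next
      case True
      then obtain s where sU: "s \<in> U" and spos: "0 < yA q s i" by auto
      have sAq: "s \<in> AS q" and sAp: "s \<in> AS p" using sU UAp UAq by auto
      have sS: "s \<in> S" using sAq ASqS by auto
      have iB: "i \<in> B" using iAq ABqB by auto
      have edge_s: "(i, s) \<in> E" using edq[OF sAq iAq spos] .
      obtain t' where t': "t' \<in> S" "0 < ys t' i" "ps t' \<le> q" using iAq iq(1) by auto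
      have notex: "\<not> (\<exists>r\<in>S. f r < q \<and> i \<in> AB (f r) \<and> 0 < yA (f r) r i)" using iAq iq(1) by auto
      have "ps t' \<le> ps s" by (rule KKT_ys[OF t'(1) sS iB t'(2) edge_s])
      moreover have "ps s \<le> p" using sAp AS_eq by auto
      ultimately have "ps t' \<le> p" by simp
      moreover have "\<not> (\<exists>r\<in>S. f r < p \<and> i \<in> AB (f r) \<and> 0 < yA (f r) r i)" using notex pq by force
      ultimately have iAp: "i \<in> AB p" using ip(1) iB t' by auto
      have zero: "yA p r i = 0" if rA: "r \<in> AS p - U" for r
      proof (rule ccontr)
        assume "yA p r i \<noteq> 0"
        then have rpos: "0 < yA p r i" using nnp[of r i] rA iAp by auto
        have edge_r: "(i, r) \<in> E" using edp[of r i] rA iAp rpos by auto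
        show False
        proof (cases "r \<in> AS q")
          case True
          have "\<not> (c r (L p r) < c r (L q r))" using rA True unfolding U_def by auto
          moreover have "c s (L q s) \<le> c r (L q r)" by (rule kq[OF sAq True iAq spos edge_r])
          moreover have "c r (L p r) \<le> c s (L p s)" using kp[of r s i] rA sAp iAp rpos edge_s by auto
          moreover have "c s (L p s) < c s (L q s)" using sU unfolding U_def by auto
          ultimately show False by linarith
        next
          case False
          have rS: "r \<in> S" and r1: "ps r \<le> p" and r2: "p \<le> f r" using rA AS_eq by auto
          have "f r < q" using False AS_eq rS r1 pq by force
          then have "f r = p" using nof rS r2 by force
          then show False using notex rS \<open>f r < q\<close> iAp rpos by auto
        qed
      qed
      have "(\<Sum>s\<in>U. yA q s i) \<le> (\<Sum>s\<in>AS q. yA q s i)"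
        by (rule sum_mono2[OF finASq UAq]) (use nnq iAq in auto)
      also have "\<dots> = xA q i" using smq iAq by auto
      also have "\<dots> \<le> xA p i"
      proof (rule ccontr)
        assume "\<not> ?thesis"
        then have lt: "xA p i < xA q i" by simp
        have bp: "best_response lam T i p (xA p i)" using ip(2) iAp by auto
        have bq: "best_response lam T i q (xA q i)" using iq(2) iAq by auto
        have "lam i (xA q i) \<le> lam i (xA p i)"
          using lam_mono[rule_format, OF iB, of "xA p i" "xA q i"] bp bq lt unfolding best_response_def by auto
        then show False using bp bq pq unfolding best_response_def by auto
      qed
      also have "\<dots> = (\<Sum>r\<in>AS p. yA p r i)" using smp iAp by auto
      also have "\<dots> = (\<Sum>r\<in>U. yA p r i)"
        by (rule sum.mono_neutral_right[OF finASp UAp]) (use zero in auto)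
      finally show ?thesis using iAp by simp
    qed
    have "(\<Sum>s\<in>U. L q s) = (\<Sum>i\<in>AB q. \<Sum>s\<in>U. yA q s i)"
      unfolding L_def load_def by (rule sum.swap)
    also have "\<dots> \<le> (\<Sum>i\<in>AB q. if i \<in> AB p then (\<Sum>s\<in>U. yA p s i) else 0)"
      by (rule sum_mono) (use buyer in auto)
    also have "\<dots> = (\<Sum>i\<in>AB q \<inter> AB p. \<Sum>s\<in>U. yA p s i)"
      using finABq by (simp add: sum.inter_restrict)
    also have "\<dots> \<le> (\<Sum>i\<in>AB p. \<Sum>s\<in>U. yA p s i)"
      by (rule sum_mono2[OF finABp]) (use nnp UAp in \<open>auto intro: sum_nonneg\<close>)
    also have "\<dots> = (\<Sum>s\<in>U. L p s)"
      unfolding L_def load_def by (rule sum.swap)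
    finally have "(\<Sum>s\<in>U. L q s) \<le> (\<Sum>s\<in>U. L p s)" .
    moreover have "(\<Sum>s\<in>U. L p s) < (\<Sum>s\<in>U. L q s)"
      by (rule sum_strict_mono[OF finU]) (use tU Ult in auto)
    ultimately show False by simp
  qed
  have main: "c t (L q t) \<le> c t (L p t)"
    if "card {r\<in>S. p < f r \<and> f r < q} = n" "ps t \<le> p" "p < q" "q \<le> f t" for n p q
    using that
  proof (induction n arbitrary: p q rule: less_induct)
    case (less n)
    show ?case
    proof (cases "\<exists>r\<in>S. p < f r \<and> f r < q")
      case False
      then show ?thesis using step less.prems by blast
    next
      case True
      then obtain r where r: "r \<in> S" "p < f r" "f r < q" by auto
      have A1: "card {r'\<in>S. p < f r' \<and> f r' < f r} < n"
        unfolding less.prems(1)[symmetric]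
        by (rule psubset_card_mono) (use finS r in auto)
      have A2: "card {r'\<in>S. f r < f r' \<and> f r' < q} < n"
        unfolding less.prems(1)[symmetric]
        by (rule psubset_card_mono) (use finS r in auto)
      have "c t (L (f r) t) \<le> c t (L p t)"
        using less.IH[OF A1 refl] less.prems r by auto
      moreover have "c t (L q t) \<le> c t (L (f r) t)"
        using less.IH[OF A2 refl] less.prems r by auto
      ultimately show ?thesis by simp
    qed
  qed
  have "ps t \<le> p1" "p2 \<le> f t" using act1 act2 AS_eq by auto
  then show ?thesis using main[OF refl _ p12] unfolding L_def by auto
qed

end
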